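(* For an $(n,k)$ SPC product code, the block error probabilities under SC and Elias' decoding over the BEC($\epsilon$) satisfy $P_{\mathrm{SC}} \leq P_{\mathrm{E}}$.
   Context: Consider an $m$-dimensional $(n,k)$ systematic single parity-check (SPC) product code (each component code along dimension $\ell$ is an $(n_\ell,n_\ell-1)$ SPC code) used over the binary erasure channel BEC($\epsilon$). Successive cancellation (SC) decoding decodes the information bits $u_1,\dots,u_k$ in order, each decision $\hat u_i$ being based on the channel output and the previous decisions $\hat u_1,\dots,\hat u_{i-1}$ (likelihoods computed recursively across dimensions); Elias' decoding decodes the component codes dimension by dimension in one sweep and computes the likelihood of each $u_i$ without using decisions on other information bits. Over the BEC both decoders output an erasure when the two hypotheses are equally likely. $P_{\mathrm{SC}}$ and $P_{\mathrm{E}}$ denote the probabilities that the decoded vector (under SC and Elias' decoding, respectively) differs from the transmitted information vector $\boldsymbol{u}$ (an erasure counts as an error). *)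

theory Defs
  imports "HOL-Probability.Probability"
begin

(* Component lengths of the m-dimensional SPC product code: ns = [n_1,...,n_m].
   Coordinate 0 along every dimension is the parity position; information bits
   are the positions with all coordinates >= 1 (systematic encoding). *)
definition positions :: "nat list \<Rightarrow> nat list set" where
  "positions ns = {p. length p = length ns \<and> (\<forall>l<length ns. p ! l < ns ! l)}"

definition info_positions :: "nat list \<Rightarrow> nat list set" where
  "info_positions ns = {p \<in> positions ns. \<forall>l<length ns. 1 \<le> p ! l}"

(* Erasure patterns: E p = True iff code bit p is erased by the BEC. *)

(* BEC synthesized channel of the SPC kernel of size n
   (x_0 = u_0 + ... + u_(n-1), x_j = u_j for j >= 1, u_0 frozen):
   u_i (i >= 1) is erased given y and u_0..u_(i-1) iff x_i is erased and
   (x_0 is erased or some x_j with j > i is erased). *)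
definition kernel_erased :: "nat \<Rightarrow> nat \<Rightarrow> (nat \<Rightarrow> bool) \<Rightarrow> bool" where
  "kernel_erased n i e \<longleftrightarrow> e i \<and> (e 0 \<or> (\<exists>j. i < j \<and> j < n \<and> e j))"

(* Block failure of (genie-aided, equivalently actual for block error) SC decoding:
   recursive across dimensions, dimension 1 being the kernel nearest the channel;
   information bits decoded in lexicographic order. Frozen branches are skipped
   since frozen bits are known to the decoder. *)
fun sc_fail :: "nat list \<Rightarrow> (nat list \<Rightarrow> bool) \<Rightarrow> bool" where
  "sc_fail [] E = E []"
| "sc_fail (n # ns) E =
     (\<exists>i\<in>{1..<n}. sc_fail ns (\<lambda>q. kernel_erased n i (\<lambda>j. E (j # q))))"

(* One Elias step along dimension l: each erased bit is recovered by its
   (n_l, n_l - 1) SPC component iff it is the only erasure on its line. *)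
definition elias_step :: "nat list \<Rightarrow> nat \<Rightarrow> (nat list \<Rightarrow> bool) \<Rightarrow> (nat list \<Rightarrow> bool)" where
  "elias_step ns l E = (\<lambda>p. E p \<and> (\<exists>j<ns ! l. j \<noteq> p ! l \<and> E (p[l := j])))"

definition elias_final :: "nat list \<Rightarrow> (nat list \<Rightarrow> bool) \<Rightarrow> (nat list \<Rightarrow> bool)" where
  "elias_final ns E = fold (elias_step ns) [0..<length ns] E"

definition elias_fail :: "nat list \<Rightarrow> (nat list \<Rightarrow> bool) \<Rightarrow> bool" where
  "elias_fail ns E \<longleftrightarrow> (\<exists>p\<in>info_positions ns. elias_final ns E p)"

definition bec_pattern :: "nat list \<Rightarrow> real \<Rightarrow> (nat list \<Rightarrow> bool) pmf" where
  "bec_pattern ns eps = Pi_pmf (positions ns) False (\<lambda>_. bernoulli_pmf eps)"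

definition P_SC :: "nat list \<Rightarrow> real \<Rightarrow> real" where
  "P_SC ns eps = measure_pmf.prob (bec_pattern ns eps) {E. sc_fail ns E}"

definition P_E :: "nat list \<Rightarrow> real \<Rightarrow> real" where
  "P_E ns eps = measure_pmf.prob (bec_pattern ns eps) {E. elias_fail ns E}"

end

theory Submission
  imports Defs
begin

lemma step_mono: "(\<And>p. E p \<Longrightarrow> E' p) \<Longrightarrow> elias_step ns l E p \<Longrightarrow> elias_step ns l E' p"
  unfolding elias_step_def by blast

lemma fold_mono: "(\<And>p. E p \<Longrightarrow> E' p) \<Longrightarrow> fold (elias_step ns) ls E p \<Longrightarrow> fold (elias_step ns) ls E' p"
proof (induction ls arbitrary: E E' p)
  case Nil then show ?case by simp
next
  case (Cons a ls)
  show ?case using Cons.prems Cons.IH[of "elias_step ns a E" "elias_step ns a E'"] step_mono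
    by (metis fold_simps(2))
qed

lemma sc_mono: "(\<And>p. E p \<Longrightarrow> E' p) \<Longrightarrow> sc_fail ns E \<Longrightarrow> sc_fail ns E'"
proof (induction ns arbitrary: E E')
  case Nil then show ?case by simp
next
  case (Cons n ns)
  from Cons.prems(2) obtain i where i: "i \<in> {1..<n}"
    and s: "sc_fail ns (\<lambda>q. kernel_erased n i (\<lambda>j. E (j # q)))" by auto
  have "sc_fail ns (\<lambda>q. kernel_erased n i (\<lambda>j. E' (j # q)))"
    by (rule Cons.IH[OF _ s]) (use Cons.prems(1) in \<open>auto simp: kernel_erased_def\<close>)
  then show ?case using i by auto
qed

lemma step_slice: "elias_step (n#ns) (Suc l) F (i#q) = elias_step ns l (\<lambda>q. F (i#q)) q"
  unfolding elias_step_def by simp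

lemma fold_slice: "(\<lambda>q. fold (elias_step (n#ns)) (map Suc ls) F (i#q)) = fold (elias_step ns) ls (\<lambda>q. F (i#q))"
proof (induction ls arbitrary: F)
  case Nil then show ?case by simp
next
  case (Cons l ls)
  have "(\<lambda>q. fold (elias_step (n#ns)) (map Suc (l#ls)) F (i#q))
      = (\<lambda>q. fold (elias_step (n#ns)) (map Suc ls) (elias_step (n#ns) (Suc l) F) (i#q))" by simp
  also have "\<dots> = fold (elias_step ns) ls (\<lambda>q. elias_step (n#ns) (Suc l) F (i#q))" by (rule Cons.IH)
  also have "(\<lambda>q. elias_step (n#ns) (Suc l) F (i#q)) = elias_step ns l (\<lambda>q. F (i#q))"
    using step_slice by blast
  finally show ?case by simp
qed

lemma upt_Suc_map: "[0..<Suc m] = 0 # map Suc [0..<m]"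
  by (simp add: map_Suc_upt upt_conv_Cons)

lemma final_cons: "elias_final (n#ns) E (i#q) = elias_final ns (\<lambda>q. elias_step (n#ns) 0 E (i#q)) q"
proof -
  have "elias_final (n#ns) E (i#q) = fold (elias_step (n#ns)) (map Suc [0..<length ns]) (elias_step (n#ns) 0 E) (i#q)"
    unfolding elias_final_def by (simp only: length_Cons upt_Suc_map) simp
  also have "\<dots> = fold (elias_step ns) [0..<length ns] (\<lambda>q. elias_step (n#ns) 0 E (i#q)) q"
    using fun_cong[OF fold_slice[of n ns "[0..<length ns]" "elias_step (n#ns) 0 E" i], of q] by simp
  finally show ?thesis unfolding elias_final_def .
qed

lemma info_cons: "i \<in> {1..<n} \<Longrightarrow> q \<in> info_positions ns \<Longrightarrow> i#q \<in> info_positions (n#ns)"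
  unfolding info_positions_def positions_def
  by (auto simp: nth_Cons split: nat.splits)

lemma sc_imp_elias: "sc_fail ns E \<Longrightarrow> elias_fail ns E"
proof (induction ns arbitrary: E)
  case Nil then show ?case
    by (simp add: elias_fail_def elias_final_def info_positions_def positions_def)
next
  case (Cons n ns)
  from Cons.prems obtain i where i: "i \<in> {1..<n}"
    and s: "sc_fail ns (\<lambda>q. kernel_erased n i (\<lambda>j. E (j # q)))" by auto
  have s2: "sc_fail ns (\<lambda>q. elias_step (n#ns) 0 E (i#q))"
    by (rule sc_mono[OF _ s]) (use i in \<open>unfold kernel_erased_def elias_step_def, auto intro: exI[of _ 0]\<close>)
  from Cons.IH[OF s2] obtain q where q: "q \<in> info_positions ns"
    and f: "elias_final ns (\<lambda>q. elias_step (n#ns) 0 E (i#q)) q"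
    unfolding elias_fail_def by blast
  show ?case unfolding elias_fail_def
    using info_cons[OF i q] f final_cons by blast
qed

theorem theorem1:
  fixes ns :: "nat list" and eps :: real
  assumes "\<forall>n\<in>set ns. 2 \<le> n"
    and "0 \<le> eps" and "eps \<le> 1"
  shows "P_SC ns eps \<le> P_E ns eps"
  unfolding P_SC_def P_E_def
  by (rule measure_pmf.finite_measure_mono) (auto intro: sc_imp_elias)

end
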